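(* Let $1<p<\infty$ and $\alpha>0$. Let $f\in\mathcal{H}^1_{p,\alpha}$ have Taylor series $f(z)=\sum_{k=0}^\infty a_kz^k$. Then for every $j\in\mathbb N\cup\{0\}$, \[ \|a_jz^j\|_{p,\alpha}\le\|f\|_{p,\alpha}\qquad\text{and}\qquad |a_j|\le\frac{\left(\frac{\alpha p}{2}\right)^{j/2}}{\Gamma\left(\frac{jp}{2}+1\right)^{1/p}}\|f\|_{p,\alpha}. \] In either inequality, equality holds if and only if $f(z)$ is a constant multiple of $z^j$.
   Context: For $\alpha>0$, $\gamma^1_\alpha(dz)=(\alpha/\pi)e^{-\alpha|z|^2}\lambda(dz)$ on $\mathbb C$, with $\lambda$ Lebesgue measure. $\mathcal{H}^1_{p,\alpha}$ is the space of entire functions $f$ with $\|f\|_{p,\alpha}:=\left(\int_{\mathbb C}|f|^p\,d\gamma^1_{\alpha p/2}\right)^{1/p}<\infty$. *)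

theory Defs
  imports "HOL-Analysis.Analysis"
begin

text \<open>Density of the Gaussian measure gamma^1_beta w.r.t. Lebesgue measure on C.\<close>
definition gauss_dens :: "real \<Rightarrow> complex \<Rightarrow> real" where
  "gauss_dens \<beta> z = (\<beta> / pi) * exp (- \<beta> * (norm z)\<^sup>2)"

definition in_fock :: "real \<Rightarrow> real \<Rightarrow> (complex \<Rightarrow> complex) \<Rightarrow> bool" where
  "in_fock p \<alpha> f \<longleftrightarrow> f holomorphic_on UNIV \<and>
     integrable lborel (\<lambda>z. norm (f z) powr p * gauss_dens (\<alpha> * p / 2) z)"

definition fock_norm :: "real \<Rightarrow> real \<Rightarrow> (complex \<Rightarrow> complex) \<Rightarrow> real" where
  "fock_norm p \<alpha> f =
     (\<integral>z. norm (f z) powr p * gauss_dens (\<alpha> * p / 2) z \<partial>lborel) powr (1 / p)"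

end

theory Submission
  imports Defs
begin


lemma tangent_powr_strict:
  fixes p r s :: real
  assumes p: "1 < p" and r: "0 < r" and s: "0 \<le> s" and ne: "s \<noteq> r"
  shows "r powr p + p * r powr (p - 1) * (s - r) < s powr p"
proof -
  have der: "\<And>x. 0 < x \<Longrightarrow> ((\<lambda>x. x powr p) has_real_derivative p * x powr (p - 1)) (at x)"
    by (rule has_real_derivative_powr)
  have cont: "\<And>a b. 0 \<le> a \<Longrightarrow> continuous_on {a..b} (\<lambda>x. x powr p)"
    using p by (intro continuous_on_powr') (auto intro: continuous_intros)
  show ?thesis
  proof (cases "s < r")
    case True
    obtain l z where z: "s < z" "z < r" and dz: "((\<lambda>x. x powr p) has_real_derivative l) (at z)"
      and eq: "r powr p - s powr p = (r - s) * l"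
    proof -
      have "\<And>x. s < x \<Longrightarrow> x < r \<Longrightarrow> (\<lambda>x. x powr p) differentiable (at x)"
        using der s real_differentiable_def by (metis le_less_trans)
      then show ?thesis using MVT[OF True cont[OF s]] that by blast
    qed
    have "l = p * z powr (p - 1)" using DERIV_unique[OF dz der] z s by auto
    moreover have "z powr (p - 1) < r powr (p - 1)" using z s p by (intro powr_less_mono2) auto
    ultimately have "r powr p - s powr p < (r - s) * (p * r powr (p - 1))"
      using eq True p by (simp add: mult_strict_left_mono)
    then show ?thesis by (simp add: algebra_simps)
  next
    case False
    then have sr: "r < s" using ne by simp
    obtain l z where z: "r < z" "z < s" and dz: "((\<lambda>x. x powr p) has_real_derivative l) (at z)"
      and eq: "s powr p - r powr p = (s - r) * l"
    proof -
      have "\<And>x. r < x \<Longrightarrow> x < s \<Longrightarrow> (\<lambda>x. x powr p) differentiable (at x)"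
        using der r real_differentiable_def by (metis less_trans)
      then show ?thesis using MVT[OF sr cont[of r s]] r that by auto
    qed
    have "l = p * z powr (p - 1)" using DERIV_unique[OF dz der] z r by auto
    moreover have "r powr (p - 1) < z powr (p - 1)" using z r p by (intro powr_less_mono2) auto
    ultimately have "(s - r) * (p * r powr (p - 1)) < s powr p - r powr p"
      using eq sr p by (simp add: mult_strict_left_mono)
    then show ?thesis by (simp add: algebra_simps)
  qed
qed

lemma tangent_powr:
  fixes p r s :: real
  assumes p: "1 < p" and r: "0 < r" and s: "0 \<le> s"
  shows "r powr p + p * r powr (p - 1) * (s - r) \<le> s powr p"
  using tangent_powr_strict[OF assms] by (cases "s = r") auto

lemma Re_eq_norm_imp:
  fixes w :: complex
  assumes "Re w = norm w"
  shows "w = complex_of_real (norm w)"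
proof -
  have "(norm w)^2 = (Re w)^2 + (Im w)^2" by (simp add: cmod_power2)
  then have "Im w = 0" using assms by simp
  then show ?thesis using assms by (simp add: complex_eq_iff)
qed

lemma ptwise_convex:
  fixes p :: real and c u :: complex
  assumes p: "1 < p"
  shows "norm c powr p + p * norm c powr (p - 2) * Re (cnj c * (u - c)) \<le> norm u powr p"
    and "norm c powr p + p * norm c powr (p - 2) * Re (cnj c * (u - c)) = norm u powr p \<Longrightarrow> u = c"
proof -
  have "norm c powr p + p * norm c powr (p - 2) * Re (cnj c * (u - c)) \<le> norm u powr p
     \<and> (norm c powr p + p * norm c powr (p - 2) * Re (cnj c * (u - c)) = norm u powr p \<longrightarrow> u = c)"
  proof (cases "c = 0")
    case True
    then show ?thesis using p by auto
  next
    case False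
    define r where "r = norm c"
    have r: "0 < r" using False by (simp add: r_def)
    have re: "Re (cnj c * (u - c)) = Re (cnj c * u) - r^2"
      using cmod_power2[of c] by (simp add: r_def algebra_simps power2_eq_square)
    have le1: "Re (cnj c * u) \<le> r * norm u"
      using complex_Re_le_cmod[of "cnj c * u"] by (simp add: r_def norm_mult)
    have pw: "r powr (p - 2) * r^2 = r powr p" "r powr (p - 2) * r = r powr (p - 1)"
    proof -
      have "r powr (p - 2) * r powr 2 = r powr p" by (simp add: powr_add[symmetric])
      then show "r powr (p - 2) * r^2 = r powr p" using r by (simp add: powr_realpow)
      have "r powr (p - 2) * r powr 1 = r powr (p - 2 + 1)" by (rule powr_add[symmetric])
      then show "r powr (p - 2) * r = r powr (p - 1)" using r by simp
    qed
    have pos: "0 < p * r powr (p - 2)" using p r by simp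
    have A: "r powr p + p * r powr (p - 2) * Re (cnj c * (u - c))
         \<le> r powr p + p * r powr (p - 1) * (norm u - r)"
    proof -
      have "p * r powr (p - 2) * Re (cnj c * (u - c)) \<le> p * r powr (p - 2) * (r * norm u - r^2)"
        using re le1 pos by (intro mult_left_mono) auto
      also have "\<dots> = p * r powr (p - 1) * (norm u - r)"
        using pw by (simp add: algebra_simps power2_eq_square)
      finally show ?thesis by simp
    qed
    have B: "r powr p + p * r powr (p - 1) * (norm u - r) \<le> norm u powr p"
      by (rule tangent_powr[OF p r]) simp
    show ?thesis
    proof (intro conjI impI)
      show "norm c powr p + p * norm c powr (p - 2) * Re (cnj c * (u - c)) \<le> norm u powr p"
        using A B by (simp add: r_def)
    next
      assume eq: "norm c powr p + p * norm c powr (p - 2) * Re (cnj c * (u - c)) = norm u powr p"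
      have nu: "norm u = r"
      proof (rule ccontr)
        assume "norm u \<noteq> r"
        then have "r powr p + p * r powr (p - 1) * (norm u - r) < norm u powr p"
          by (intro tangent_powr_strict[OF p r]) auto
        then show False using A eq by (simp add: r_def)
      qed
      have "p * r powr (p - 2) * Re (cnj c * (u - c)) = p * r powr (p - 2) * (r * norm u - r^2)"
        using A B eq nu pw by (simp add: r_def algebra_simps power2_eq_square)
      then have "Re (cnj c * (u - c)) = r * norm u - r^2" using pos by (metis mult_cancel_left less_irrefl)
      then have "Re (cnj c * u) = norm (cnj c * u)" using re nu by (simp add: r_def norm_mult)
      then have "cnj c * u = complex_of_real (norm (cnj c * u))" by (rule Re_eq_norm_imp)
      also have "\<dots> = complex_of_real (r^2)" using nu by (simp add: r_def norm_mult power2_eq_square)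
      also have "\<dots> = cnj c * c" by (simp add: r_def complex_norm_square[symmetric] mult.commute)
      finally show "u = c" using False by simp
    qed
  qed
  then show "norm c powr p + p * norm c powr (p - 2) * Re (cnj c * (u - c)) \<le> norm u powr p"
    and "norm c powr p + p * norm c powr (p - 2) * Re (cnj c * (u - c)) = norm u powr p \<Longrightarrow> u = c"
    by auto
qed

lemma integral_cis_int:
  fixes n :: int
  shows "((\<lambda>t. cis (real_of_int n * t)) has_integral (if n = 0 then complex_of_real (2*pi) else 0)) {0..2*pi}"
proof (cases "n = 0")
  case True
  then show ?thesis using has_integral_const_real[of "1::complex" 0 "2*pi"]
    by (simp add: scaleR_conv_of_real)
next
  case False
  define F where "F t = cis (real_of_int n * t) / (\<i> * of_int n)" for t
  have "((\<lambda>t. cis (real_of_int n * t)) has_integral (F (2*pi) - F 0)) {0..2*pi}"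
  proof (rule fundamental_theorem_of_calculus)
    fix x assume "x \<in> {0..2*pi}"
    have "((\<lambda>t. cis (real_of_int n * t)) has_derivative (\<lambda>h. (real_of_int n * h) *\<^sub>R (\<i> * cis (real_of_int n * x)))) (at x within {0..2*pi})"
      by (intro has_derivative_cis derivative_eq_intros) auto
    then have "((\<lambda>t. cis (real_of_int n * t)) has_vector_derivative (real_of_int n) *\<^sub>R (\<i> * cis (real_of_int n * x))) (at x within {0..2*pi})"
      unfolding has_vector_derivative_def by (simp add: scaleR_scaleR mult.commute)
    then have "(F has_vector_derivative ((real_of_int n) *\<^sub>R (\<i> * cis (real_of_int n * x))) / (\<i> * of_int n)) (at x within {0..2*pi})"
      unfolding F_def by (intro has_vector_derivative_divide)
    moreover have "((real_of_int n) *\<^sub>R (\<i> * cis (real_of_int n * x))) / (\<i> * of_int n) = cis (real_of_int n * x)"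
      using False by (simp add: scaleR_conv_of_real field_simps)
    ultimately show "(F has_vector_derivative cis (real_of_int n * x)) (at x within {0..2*pi})" by simp
  qed simp
  moreover have "F (2*pi) - F 0 = 0"
  proof -
    have "cis (real_of_int n * (2*pi)) = 1"
      using cis_multiple_2pi[of "real_of_int n"] by (simp add: mult.commute mult.left_commute)
    then show ?thesis by (simp add: F_def)
  qed
  ultimately show ?thesis using False by simp
qed

lemma coeff_formula:
  fixes f :: "complex \<Rightarrow> complex" and a :: "nat \<Rightarrow> complex"
  assumes S: "\<And>z. (\<lambda>k. a k * z ^ k) sums f z"
  shows "((\<lambda>t. f (cis t * z) * cis (- (real k * t))) has_integral (2*pi) * (a k * z ^ k)) {0..2*pi}"
proof -
  define h where "h m t = a m * z^m * cis (real_of_int (int m - int k) * t)" for m t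
  have hsum: "(\<lambda>m. h m t) sums (f (cis t * z) * cis (- (real k * t)))" for t
  proof -
    have "(\<lambda>m. a m * (cis t * z)^m * cis (- (real k * t))) sums (f (cis t * z) * cis (- (real k * t)))"
      by (intro sums_mult2 S)
    moreover have "a m * (cis t * z)^m * cis (- (real k * t)) = h m t" for m
    proof -
      have "(cis t * z)^m * cis (- (real k * t)) = z^m * (cis (real m * t) * cis (- (real k * t)))"
        using Complex.DeMoivre[of t m] by (simp add: power_mult_distrib)
      also have "cis (real m * t) * cis (- (real k * t)) = cis (real_of_int (int m - int k) * t)"
        by (simp add: cis_mult algebra_simps)
      finally show ?thesis by (simp add: h_def mult.assoc)
    qed
    ultimately show ?thesis by simp
  qed
  define M where "M m = norm (a m * z^m)" for m
  have summ: "summable M"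
  proof -
    have "summable (\<lambda>n. a n * (complex_of_real (norm z + 1))^n)"
      using S sums_summable by blast
    then show ?thesis unfolding M_def by (rule powser_insidea) simp
  qed
  have nh: "norm (h m t) \<le> M m" for m t by (simp add: h_def M_def norm_mult)
  have ul: "uniform_limit {0..2*pi} (\<lambda>n t. \<Sum>m<n. h m t) (\<lambda>t. \<Sum>m. h m t) sequentially"
    by (rule Weierstrass_m_test[OF _ summ]) (use nh in auto)
  have cont: "continuous_on {0..2*pi} (\<lambda>t. \<Sum>m<n. h m t)" for n
    unfolding h_def by (intro continuous_intros)
  obtain I J where I: "\<And>n. ((\<lambda>t. \<Sum>m<n. h m t) has_integral I n) {0..2*pi}"
    and J: "((\<lambda>t. \<Sum>m. h m t) has_integral J) {0..2*pi}" and IJ: "I \<longlonglongrightarrow> J"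
    by (rule uniform_limit_integral[OF ul cont]) auto
  have hint: "(h m has_integral (if m = k then (2*pi) * (a k * z^k) else 0)) {0..2*pi}" for m
  proof -
    have "((\<lambda>t. a m * z^m * cis (real_of_int (int m - int k) * t)) has_integral
        a m * z^m * (if int m - int k = 0 then complex_of_real (2*pi) else 0)) {0..2*pi}"
      by (intro has_integral_mult_right integral_cis_int)
    moreover have "h m = (\<lambda>t. a m * z^m * cis (real_of_int (int m - int k) * t))"
      by (simp add: fun_eq_iff h_def)
    ultimately show ?thesis by (cases "m = k") (simp_all add: mult_ac)
  qed
  have In: "I n = (\<Sum>m<n. if m = k then (2*pi) * (a k * z^k) else 0)" for n
    using has_integral_unique[OF I has_integral_sum[OF _ hint]] by simp
  have "eventually (\<lambda>n. I n = (2*pi) * (a k * z^k)) sequentially"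
    using eventually_ge_at_top[of "Suc k"]
    by eventually_elim (auto simp: In sum.delta)
  then have "I \<longlonglongrightarrow> (2*pi) * (a k * z^k)"
    by (rule tendsto_eventually)
  then have "J = (2*pi) * (a k * z^k)" using IJ LIMSEQ_unique by blast
  moreover have "(\<lambda>t. \<Sum>m. h m t) = (\<lambda>t. f (cis t * z) * cis (- (real k * t)))"
    using hsum sums_unique by (metis)
  ultimately show ?thesis using J by simp
qed

lemma circle_ineq:
  fixes f :: "complex \<Rightarrow> complex" and a :: "nat \<Rightarrow> complex" and p :: real
  assumes p: "1 < p" and S: "\<And>z. (\<lambda>k. a k * z ^ k) sums f z"
    and contf: "continuous_on UNIV f"
  shows "((\<lambda>t. norm (f (cis t * z)) powr p) has_integral
            integral {0..2*pi} (\<lambda>t. norm (f (cis t * z)) powr p)) {0..2*pi}"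
    and "2 * pi * norm (a j * z^j) powr p \<le> integral {0..2*pi} (\<lambda>t. norm (f (cis t * z)) powr p)"
    and "integral {0..2*pi} (\<lambda>t. norm (f (cis t * z)) powr p) = 2 * pi * norm (a j * z^j) powr p
         \<Longrightarrow> \<forall>t\<in>{0..2*pi}. f (cis t * z) = a j * z^j * cis (real j * t)"
proof -
  define c where "c = a j * z^j"
  define g where "g t = f (cis t * z)" for t
  define u where "u t = g t * cis (- (real j * t))" for t
  have contg: "continuous_on A g" for A unfolding g_def
    by (intro continuous_on_compose2[OF contf] continuous_intros) auto
  have contgp: "continuous_on A (\<lambda>t. norm (g t) powr p)" for A
    using p by (intro continuous_on_powr' continuous_intros contg) auto
  have intgp: "((\<lambda>t. norm (g t) powr p) has_integral integral {0..2*pi} (\<lambda>t. norm (g t) powr p)) {0..2*pi}"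
    by (intro integrable_integral integrable_continuous_interval contgp)
  then show "((\<lambda>t. norm (f (cis t * z)) powr p) has_integral
            integral {0..2*pi} (\<lambda>t. norm (f (cis t * z)) powr p)) {0..2*pi}"
    by (simp add: g_def)
  define I where "I = integral {0..2*pi} (\<lambda>t. norm (g t) powr p)"
  have nu: "norm (u t) = norm (g t)" for t by (simp add: u_def norm_mult)
  have hu: "(u has_integral (2*pi) * c) {0..2*pi}"
  proof -
    have "u = (\<lambda>t. f (cis t * z) * cis (- (real j * t)))" by (simp add: fun_eq_iff u_def g_def)
    then show ?thesis using coeff_formula[OF S, of z j] by (simp add: c_def)
  qed
  have hu0: "((\<lambda>t. u t - c) has_integral 0) {0..2*pi}"
  proof -
    have "((\<lambda>t. u t - c) has_integral (complex_of_real (2*pi) * c - measure lborel {0..2*pi::real} *\<^sub>R c)) {0..2*pi}"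
      by (intro has_integral_diff hu has_integral_const_real)
    then show ?thesis by (simp add: scaleR_conv_of_real)
  qed
  have hre: "((\<lambda>t. Re (cnj c * (u t - c))) has_integral 0) {0..2*pi}"
    using has_integral_linear[OF has_integral_mult_right[OF hu0, of "cnj c"] bounded_linear_Re]
    by (simp add: o_def)
  define D where "D t = norm (g t) powr p - (norm c powr p + p * norm c powr (p - 2) * Re (cnj c * (u t - c)))" for t
  have Dnn: "0 \<le> D t" for t
    using ptwise_convex(1)[OF p, of c "u t"] by (simp add: D_def nu)
  have hD: "(D has_integral (I - 2 * pi * norm c powr p)) {0..2*pi}"
  proof -
    have "(D has_integral (I - (measure lborel {0..2*pi::real} *\<^sub>R norm c powr p + p * norm c powr (p - 2) * 0))) {0..2*pi}"
      unfolding D_def I_def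
      by (intro has_integral_diff has_integral_add intgp has_integral_const_real has_integral_mult_right hre)
    then show ?thesis by simp
  qed
  have "0 \<le> I - 2 * pi * norm c powr p"
    by (rule has_integral_nonneg[OF hD]) (use Dnn in auto)
  then show "2 * pi * norm (a j * z^j) powr p \<le> integral {0..2*pi} (\<lambda>t. norm (f (cis t * z)) powr p)"
    by (simp add: I_def c_def g_def)
  assume eq: "integral {0..2*pi} (\<lambda>t. norm (f (cis t * z)) powr p) = 2 * pi * norm (a j * z^j) powr p"
  then have hD0: "(D has_integral 0) (cbox 0 (2*pi))" using hD by (simp add: I_def c_def g_def)
  have contD: "continuous_on (cbox 0 (2*pi)) D"
    unfolding D_def u_def by (intro continuous_intros contgp contg)
  show "\<forall>t\<in>{0..2*pi}. f (cis t * z) = a j * z^j * cis (real j * t)"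
  proof
    fix t :: real assume t: "t \<in> {0..2*pi}"
    have "D t = 0"
      by (rule has_integral_0_cbox_imp_0[OF contD _ hD0]) (use Dnn t in auto, use pi_gt_zero in linarith)
    then have "u t = c" using ptwise_convex(2)[OF p, of c "u t"] by (simp add: D_def nu)
    then have "g t * cis (- (real j * t)) * cis (real j * t) = c * cis (real j * t)"
      by (simp add: u_def)
    moreover have "g t * cis (- (real j * t)) * cis (real j * t) = g t"
      by (simp add: mult.assoc cis_mult)
    ultimately have "g t = c * cis (real j * t)" by simp
    then show "f (cis t * z) = a j * z^j * cis (real j * t)" by (simp add: g_def c_def)
  qed
qed



lemma lborel_complex:
  "(lborel :: complex measure) = distr (lborel :: (real \<times> real) measure) borel (\<lambda>(x,y). Complex x y)"
proof (rule lborel_eqI)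
  fix l u :: complex
  assume le: "\<And>b. b \<in> Basis \<Longrightarrow> l \<bullet> b \<le> u \<bullet> b"
  have meas: "(\<lambda>(x,y). Complex x y) \<in> borel_measurable (lborel :: (real \<times> real) measure)"
  proof -
    have "(\<lambda>(x,y). Complex x y) = (\<lambda>z::real\<times>real. complex_of_real (fst z) + \<i> * complex_of_real (snd z))"
      by (auto simp: fun_eq_iff Complex_eq)
    also have "\<dots> \<in> borel_measurable borel"
      by (intro borel_measurable_continuous_onI continuous_intros)
    finally show ?thesis by simp
  qed
  have pre: "(\<lambda>(x,y). Complex x y) -` box l u = box (Re l, Im l) (Re u, Im u)"
    by (auto simp: box_def Basis_complex_def Basis_prod_def inner_complex_def)
  have le2: "Re l \<le> Re u" "Im l \<le> Im u" using le[of 1] le[of "\<i>"] by (auto simp: Basis_complex_def inner_complex_def)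
  show "emeasure (distr lborel borel (\<lambda>(x,y). Complex x y)) (box l u) = ennreal (\<Prod>b\<in>Basis. (u - l) \<bullet> b)"
    using le2
    by (subst emeasure_distr[OF meas]) (auto simp: pre emeasure_lborel_box_eq Basis_complex_def Basis_prod_def inner_complex_def)
qed simp

lemma borel_measurable_Complex[measurable]:
  fixes f g :: "'a \<Rightarrow> real"
  assumes [measurable]: "f \<in> borel_measurable M" "g \<in> borel_measurable M"
  shows "(\<lambda>x. Complex (f x) (g x)) \<in> borel_measurable M"
proof -
  have "(\<lambda>x. Complex (f x) (g x)) = (\<lambda>x. complex_of_real (f x) + \<i> * complex_of_real (g x))"
    by (auto simp: fun_eq_iff Complex_eq)
  also have "\<dots> \<in> borel_measurable M" by measurable
  finally show ?thesis .
qed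

lemma meas_Complex_pair[measurable]:
  "(\<lambda>x::real\<times>real. Complex (fst x) (snd x)) \<in> borel_measurable borel"
proof -
  have "(\<lambda>x::real\<times>real. Complex (fst x) (snd x)) = (\<lambda>z::real\<times>real. complex_of_real (fst z) + \<i> * complex_of_real (snd z))"
    by (auto simp: fun_eq_iff Complex_eq)
  also have "\<dots> \<in> borel_measurable borel"
    by (intro borel_measurable_continuous_onI continuous_intros)
  finally show ?thesis .
qed

lemma nn_integral_complex:
  fixes g :: "complex \<Rightarrow> ennreal"
  assumes [measurable]: "g \<in> borel_measurable borel"
  shows "(\<integral>\<^sup>+z. g z \<partial>lborel) = (\<integral>\<^sup>+x. \<integral>\<^sup>+y. g (Complex x y) \<partial>lborel \<partial>lborel)"
proof -
  have "(\<integral>\<^sup>+z. g z \<partial>lborel) = (\<integral>\<^sup>+z. g z \<partial>(distr (lborel :: (real \<times> real) measure) borel (\<lambda>(x,y). Complex x y)))"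
    by (subst lborel_complex[symmetric]) simp
  also have "\<dots> = (\<integral>\<^sup>+xy. g (case xy of (x,y) \<Rightarrow> Complex x y) \<partial>(lborel :: (real \<times> real) measure))"
    by (subst nn_integral_distr) (auto simp: case_prod_beta')
  also have "\<dots> = (\<integral>\<^sup>+xy. g (case xy of (x,y) \<Rightarrow> Complex x y) \<partial>(lborel \<Otimes>\<^sub>M lborel))"
    by (simp add: lborel_prod)
  also have "\<dots> = (\<integral>\<^sup>+x. \<integral>\<^sup>+y. g (Complex x y) \<partial>lborel \<partial>lborel)"
    by (subst lborel.nn_integral_fst[symmetric]) (auto simp: case_prod_beta')
  finally show ?thesis .
qed

lemma shear1:
  fixes g :: "complex \<Rightarrow> ennreal" and a :: real
  assumes [measurable]: "g \<in> borel_measurable borel"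
  shows "(\<integral>\<^sup>+z. g (Complex (Re z + a * Im z) (Im z)) \<partial>lborel) = (\<integral>\<^sup>+z. g z \<partial>lborel)"
proof -
  have "(\<integral>\<^sup>+z. g (Complex (Re z + a * Im z) (Im z)) \<partial>lborel)
      = (\<integral>\<^sup>+x. \<integral>\<^sup>+y. g (Complex (x + a * y) y) \<partial>lborel \<partial>lborel)"
    by (subst nn_integral_complex) auto
  also have "\<dots> = (\<integral>\<^sup>+y. \<integral>\<^sup>+x. g (Complex (x + a * y) y) \<partial>lborel \<partial>lborel)"
    by (rule lborel_pair.Fubini'[symmetric]) (simp add: case_prod_beta')
  also have "\<dots> = (\<integral>\<^sup>+y. \<integral>\<^sup>+x. g (Complex x y) \<partial>lborel \<partial>lborel)"
  proof (rule nn_integral_cong)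
    fix y :: real
    show "(\<integral>\<^sup>+x. g (Complex (x + a * y) y) \<partial>lborel) = (\<integral>\<^sup>+x. g (Complex x y) \<partial>lborel)"
      using nn_integral_real_affine[of "\<lambda>x. g (Complex x y)" 1 "a * y"] by (simp add: add.commute)
  qed
  also have "\<dots> = (\<integral>\<^sup>+x. \<integral>\<^sup>+y. g (Complex x y) \<partial>lborel \<partial>lborel)"
    by (rule lborel_pair.Fubini') (simp add: case_prod_beta')
  also have "\<dots> = (\<integral>\<^sup>+z. g z \<partial>lborel)"
    by (subst nn_integral_complex) auto
  finally show ?thesis .
qed

lemma shear2:
  fixes g :: "complex \<Rightarrow> ennreal" and a :: real
  assumes [measurable]: "g \<in> borel_measurable borel"
  shows "(\<integral>\<^sup>+z. g (Complex (Re z) (Im z + a * Re z)) \<partial>lborel) = (\<integral>\<^sup>+z. g z \<partial>lborel)"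
proof -
  have "(\<integral>\<^sup>+z. g (Complex (Re z) (Im z + a * Re z)) \<partial>lborel)
      = (\<integral>\<^sup>+x. \<integral>\<^sup>+y. g (Complex x (y + a * x)) \<partial>lborel \<partial>lborel)"
    by (subst nn_integral_complex) auto
  also have "\<dots> = (\<integral>\<^sup>+x. \<integral>\<^sup>+y. g (Complex x y) \<partial>lborel \<partial>lborel)"
  proof (rule nn_integral_cong)
    fix x :: real
    show "(\<integral>\<^sup>+y. g (Complex x (y + a * x)) \<partial>lborel) = (\<integral>\<^sup>+y. g (Complex x y) \<partial>lborel)"
      using nn_integral_real_affine[of "\<lambda>y. g (Complex x y)" 1 "a * x"] by (simp add: add.commute)
  qed
  also have "\<dots> = (\<integral>\<^sup>+z. g z \<partial>lborel)"
    by (subst nn_integral_complex) auto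
  finally show ?thesis .
qed

lemma rot_inv_aux:
  fixes g :: "complex \<Rightarrow> ennreal"
  assumes [measurable]: "g \<in> borel_measurable borel" and u: "norm u = 1" "u \<noteq> -1"
  shows "(\<integral>\<^sup>+z. g (u * z) \<partial>lborel) = (\<integral>\<^sup>+z. g z \<partial>lborel)"
proof -
  define c where "c = Re u"
  define s where "s = Im u"
  have cs: "c^2 + s^2 = 1" using u(1) cmod_power2[of u] by (simp add: c_def s_def)
  have c1: "1 + c \<noteq> 0"
  proof
    assume "1 + c = 0"
    then have "c = -1" by simp
    with cs have "s = 0" by simp
    with \<open>c = -1\<close> have "u = -1" by (simp add: c_def s_def complex_eq_iff)
    with u(2) show False by simp
  qed
  define t where "t = s / (1 + c)"
  have ts: "t * s = 1 - c"
  proof -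
    have "t * s = s^2 / (1 + c)" by (simp add: t_def power2_eq_square)
    also have "\<dots> = (1 - c) * (1 + c) / (1 + c)" using cs by (simp add: algebra_simps power2_eq_square)
    also have "\<dots> = 1 - c" using c1 by simp
    finally show ?thesis .
  qed
  have t1: "t * (1 + c) = s" using c1 by (simp add: t_def)
  have t2: "t * (2 - t * s) = s"
  proof -
    have "t * (2 - t * s) = t * (1 + c)" using ts by simp
    also have "\<dots> = s" using c1 by (simp add: t_def)
    finally show ?thesis .
  qed
  define S1 where "S1 z = Complex (Re z + (- t) * Im z) (Im z)" for z
  define T where "T z = Complex (Re z) (Im z + s * Re z)" for z
  have eq: "u * z = S1 (T (S1 z))" for z
  proof -
    have r: "Re (S1 (T (S1 z))) = Re z * c - Im z * s"
    proof -
      have "Re (S1 (T (S1 z))) = Re z * (1 - t * s) - Im z * (t * (2 - t * s))"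
        by (simp add: S1_def T_def algebra_simps)
      also have "\<dots> = Re z * c - Im z * s" by (simp only: t2) (simp add: ts)
      finally show ?thesis .
    qed
    have i: "Im (S1 (T (S1 z))) = s * Re z + Im z * c"
    proof -
      have "Im (S1 (T (S1 z))) = s * Re z + Im z * (1 - t * s)"
        by (simp add: S1_def T_def algebra_simps)
      also have "\<dots> = s * Re z + Im z * c" by (simp add: ts)
      finally show ?thesis .
    qed
    from r i have "Re (S1 (T (S1 z))) = Re z * c - Im z * s" "Im (S1 (T (S1 z))) = s * Re z + Im z * c" .
    then show ?thesis by (simp add: complex_eq_iff c_def s_def algebra_simps)
  qed
  have [measurable]: "S1 \<in> borel_measurable borel" "T \<in> borel_measurable borel"
    unfolding S1_def[abs_def] T_def[abs_def] by measurable
  have "(\<integral>\<^sup>+z. g (u * z) \<partial>lborel) = (\<integral>\<^sup>+z. (\<lambda>w. g (S1 (T w))) (S1 z) \<partial>lborel)"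
    by (simp add: eq)
  also have "\<dots> = (\<integral>\<^sup>+w. g (S1 (T w)) \<partial>lborel)"
    unfolding S1_def by (rule shear1) (simp add: S1_def[symmetric])
  also have "\<dots> = (\<integral>\<^sup>+w. g (S1 w) \<partial>lborel)"
    unfolding T_def by (rule shear2) measurable
  also have "\<dots> = (\<integral>\<^sup>+w. g w \<partial>lborel)"
    unfolding S1_def by (rule shear1) simp
  finally show ?thesis .
qed

lemma rot_inv:
  fixes g :: "complex \<Rightarrow> ennreal"
  assumes [measurable]: "g \<in> borel_measurable borel" and u: "norm u = 1"
  shows "(\<integral>\<^sup>+z. g (u * z) \<partial>lborel) = (\<integral>\<^sup>+z. g z \<partial>lborel)"
proof (cases "u = -1")
  case True
  have "(\<integral>\<^sup>+z. g (u * z) \<partial>lborel) = (\<integral>\<^sup>+z. (\<lambda>w. g (\<i> * w)) (\<i> * z) \<partial>lborel)"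
    using True by (simp add: mult.assoc[symmetric])
  also have "\<dots> = (\<integral>\<^sup>+w. g (\<i> * w) \<partial>lborel)"
    by (rule rot_inv_aux) (auto simp: complex_eq_iff)
  also have "\<dots> = (\<integral>\<^sup>+w. g w \<partial>lborel)"
    by (rule rot_inv_aux) (auto simp: complex_eq_iff)
  finally show ?thesis .
next
  case False
  then show ?thesis using rot_inv_aux u by simp
qed

lemma rot_avg:
  fixes H :: "complex \<Rightarrow> ennreal"
  assumes [measurable]: "H \<in> borel_measurable borel"
  shows "(\<integral>\<^sup>+z. \<integral>\<^sup>+t. H (cis t * z) * indicator {0..2*pi} t \<partial>lborel \<partial>lborel) = ennreal (2*pi) * (\<integral>\<^sup>+z. H z \<partial>lborel)"
proof -
  have [measurable]: "(\<lambda>x::complex\<times>real. cis (snd x) * fst x) \<in> borel_measurable (lborel \<Otimes>\<^sub>M lborel)"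
  proof -
    have "(\<lambda>x::complex\<times>real. cis (snd x) * fst x) \<in> borel_measurable borel"
      by (intro borel_measurable_continuous_onI continuous_intros)
    then show ?thesis unfolding lborel_prod by simp
  qed
  have "(\<integral>\<^sup>+z. \<integral>\<^sup>+t. H (cis t * z) * indicator {0..2*pi} t \<partial>lborel \<partial>lborel)
     = (\<integral>\<^sup>+t. \<integral>\<^sup>+z. H (cis t * z) * indicator {0..2*pi} t \<partial>lborel \<partial>lborel)"
    by (rule lborel_pair.Fubini'[symmetric]) (simp add: case_prod_beta')
  also have "\<dots> = (\<integral>\<^sup>+t. (\<integral>\<^sup>+z. H z \<partial>lborel) * indicator {0..2*pi} t \<partial>lborel)"
    by (intro nn_integral_cong) (simp add: nn_integral_multc rot_inv)
  also have "\<dots> = ennreal (2*pi) * (\<integral>\<^sup>+z. H z \<partial>lborel)"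
    by (simp add: nn_integral_cmult mult.commute)
  finally show ?thesis .
qed

lemma distr_neg_norm2:
  "distr (lborel :: complex measure) borel (\<lambda>z. - ((norm z)^2)) = density lborel (\<lambda>t. ennreal pi * indicator {..0} t)"
proof (rule measure_eqI_lessThan)
  fix x :: real
  have em: "emeasure (distr (lborel :: complex measure) borel (\<lambda>z. - ((norm z)^2))) {x<..} = ennreal (pi * max 0 (-x))"
  proof -
    have "emeasure (distr (lborel :: complex measure) borel (\<lambda>z. - ((norm z)^2))) {x<..}
        = emeasure lborel ((\<lambda>z::complex. - ((norm z)^2)) -` {x<..})"
      by (subst emeasure_distr) auto
    also have "\<dots> = ennreal (pi * max 0 (-x))"
    proof (cases "x < 0")
      case True
      have "(\<lambda>z::complex. - ((norm z)^2)) -` {x<..} = ball 0 (sqrt (-x))"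
      proof (intro set_eqI iffI)
        fix z :: complex assume "z \<in> (\<lambda>z::complex. - ((norm z)^2)) -` {x<..}"
        then have "(norm z)^2 < -x" by simp
        then show "z \<in> ball 0 (sqrt (-x))" by (simp add: real_less_rsqrt)
      next
        fix z :: complex assume "z \<in> ball 0 (sqrt (-x))"
        then have "norm z < sqrt (-x)" by simp
        then have "(norm z)^2 < (sqrt (-x))^2" by (intro power_strict_mono) auto
        then show "z \<in> (\<lambda>z::complex. - ((norm z)^2)) -` {x<..}" using True by simp
      qed
      moreover have "emeasure lborel (ball (0::complex) (sqrt (-x))) = ennreal (pi * max 0 (-x))"
        using True by (subst emeasure_ball) (auto simp: unit_ball_vol_2)
      ultimately show ?thesis by simp
    next
      case False
      then have "(\<lambda>z::complex. - ((norm z)^2)) -` {x<..} = {}"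
        by auto (metis neg_le_0_iff_le not_le zero_le_power2 order.trans)
      then show ?thesis using False by simp
    qed
    finally show ?thesis .
  qed
  show "emeasure (distr (lborel :: complex measure) borel (\<lambda>z. - ((norm z)^2))) {x<..} < \<infinity>"
    using em by simp
  have "emeasure (density lborel (\<lambda>t. ennreal pi * indicator {..0} t)) {x<..}
      = (\<integral>\<^sup>+t. ennreal pi * indicator ({x<..0}) t \<partial>lborel)"
    by (subst emeasure_density) (auto intro!: nn_integral_cong split: split_indicator)
  also have "\<dots> = ennreal (pi * max 0 (-x))"
    by (subst nn_integral_cmult) (auto simp: ennreal_mult max_def)
  finally show "emeasure (distr (lborel :: complex measure) borel (\<lambda>z. - ((norm z)^2))) {x<..} =
      emeasure (density lborel (\<lambda>t. ennreal pi * indicator {..0} t)) {x<..}"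
    using em by simp
qed auto

lemma radial:
  fixes H :: "real \<Rightarrow> ennreal"
  assumes [measurable]: "H \<in> borel_measurable borel"
  shows "(\<integral>\<^sup>+z. H ((norm z)^2) \<partial>(lborel :: complex measure)) = ennreal pi * (\<integral>\<^sup>+s. H s * indicator {0..} s \<partial>lborel)"
proof -
  have "(\<integral>\<^sup>+z. H ((norm z)^2) \<partial>(lborel :: complex measure)) = (\<integral>\<^sup>+z. H (- (- ((norm z)^2))) \<partial>(lborel :: complex measure))"
    by simp
  also have "\<dots> = (\<integral>\<^sup>+t. H (- t) \<partial>(distr (lborel :: complex measure) borel (\<lambda>z. - ((norm z)^2))))"
    by (subst nn_integral_distr) auto
  also have "\<dots> = (\<integral>\<^sup>+t. ennreal pi * indicator {..0} t * H (- t) \<partial>lborel)"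
    unfolding distr_neg_norm2 by (subst nn_integral_density) auto
  also have "\<dots> = ennreal pi * (\<integral>\<^sup>+t. H (- t) * indicator {0..} (- t) \<partial>lborel)"
    by (subst nn_integral_cmult[symmetric]) (auto intro!: nn_integral_cong split: split_indicator simp: mult_ac)
  also have "(\<integral>\<^sup>+t. H (- t) * indicator {0..} (- t) \<partial>lborel) = (\<integral>\<^sup>+s. H s * indicator {0..} s \<partial>lborel)"
    using nn_integral_real_affine[of "\<lambda>s. H s * indicator {0..} s" "-1" 0] by simp
  finally show ?thesis .
qed

lemma gamma_scaled:
  fixes \<beta> q :: real
  assumes b: "0 < \<beta>" and q: "0 \<le> q"
  shows "(\<integral>\<^sup>+s. ennreal (s powr q * exp (- \<beta> * s)) * indicator {0..} s \<partial>lborel) = ennreal (Gamma (q + 1) / (\<beta> * \<beta> powr q))"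
proof -
  define K where "K = (\<integral>\<^sup>+s. ennreal (s powr q * exp (- \<beta> * s)) * indicator {0..} s \<partial>lborel)"
  have "ennreal (Gamma (q + 1)) = (\<integral>\<^sup>+t. ennreal (indicator {0..} t * t powr (q + 1 - 1) / exp t) \<partial>lborel)"
    using q by (intro Gamma_conv_nn_integral_real) simp
  also have "\<dots> = ennreal \<beta> * (\<integral>\<^sup>+s. ennreal (indicator {0..} (0 + \<beta> * s) * (0 + \<beta> * s) powr (q + 1 - 1) / exp (0 + \<beta> * s)) \<partial>lborel)"
    using nn_integral_real_affine[of "\<lambda>t. ennreal (indicator {0..} t * t powr (q + 1 - 1) / exp t)" \<beta> 0] b
    by simp
  also have "(\<integral>\<^sup>+s. ennreal (indicator {0..} (0 + \<beta> * s) * (0 + \<beta> * s) powr (q + 1 - 1) / exp (0 + \<beta> * s)) \<partial>lborel)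
      = (\<integral>\<^sup>+s. ennreal (\<beta> powr q) * (ennreal (s powr q * exp (- \<beta> * s)) * indicator {0..} s) \<partial>lborel)"
  proof (intro nn_integral_cong)
    fix s :: real
    show "ennreal (indicator {0..} (0 + \<beta> * s) * (0 + \<beta> * s) powr (q + 1 - 1) / exp (0 + \<beta> * s))
        = ennreal (\<beta> powr q) * (ennreal (s powr q * exp (- \<beta> * s)) * indicator {0..} s)"
    proof (cases "0 \<le> s")
      case True
      then have "(\<beta> * s) powr q = \<beta> powr q * s powr q" using b by (simp add: powr_mult)
      then show ?thesis using True b
        by (simp add: ennreal_mult[symmetric] exp_minus field_simps)
    next
      case False
      then have "\<not> 0 \<le> \<beta> * s" using b by (simp add: zero_le_mult_iff)
      then show ?thesis using False by simp
    qed
  qed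
  also have "\<dots> = ennreal (\<beta> powr q) * K"
    by (simp add: K_def nn_integral_cmult)
  finally have G: "ennreal (Gamma (q + 1)) = ennreal (\<beta> * \<beta> powr q) * K"
    using b by (simp add: ennreal_mult mult.assoc)
  have pos: "0 < \<beta> * \<beta> powr q" using b by simp
  have "K = ennreal (1 / (\<beta> * \<beta> powr q)) * (ennreal (\<beta> * \<beta> powr q) * K)"
    using pos b by (simp add: mult.assoc[symmetric] ennreal_mult[symmetric])
  also have "\<dots> = ennreal (Gamma (q + 1) / (\<beta> * \<beta> powr q))"
  proof -
    have "0 < Gamma (q + 1)" using q by (intro Gamma_real_pos) simp
    then show ?thesis unfolding G[symmetric] using pos
      by (subst ennreal_mult[symmetric]) auto
  qed
  finally show ?thesis by (simp add: K_def)
qed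

lemma gauss_moment:
  fixes \<beta> q :: real
  assumes b: "0 < \<beta>" and q: "0 \<le> q"
  shows "(\<integral>\<^sup>+z. ennreal (((norm z)^2) powr q * gauss_dens \<beta> z) \<partial>(lborel :: complex measure)) = ennreal (Gamma (q + 1) / \<beta> powr q)"
proof -
  have "(\<integral>\<^sup>+z. ennreal (((norm z)^2) powr q * gauss_dens \<beta> z) \<partial>(lborel :: complex measure))
     = (\<integral>\<^sup>+z. (\<lambda>s. ennreal (s powr q * (\<beta> / pi * exp (- \<beta> * s)))) ((norm z)^2) \<partial>(lborel :: complex measure))"
    by (simp add: gauss_dens_def)
  also have "\<dots> = ennreal pi * (\<integral>\<^sup>+s. ennreal (s powr q * (\<beta> / pi * exp (- \<beta> * s))) * indicator {0..} s \<partial>lborel)"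
    by (rule radial) simp
  also have "(\<integral>\<^sup>+s. ennreal (s powr q * (\<beta> / pi * exp (- \<beta> * s))) * indicator {0..} s \<partial>lborel)
      = (\<integral>\<^sup>+s. ennreal (\<beta> / pi) * (ennreal (s powr q * exp (- \<beta> * s)) * indicator {0..} s) \<partial>lborel)"
  proof (intro nn_integral_cong)
    fix s :: real
    have "ennreal (s powr q * (\<beta> / pi * exp (- \<beta> * s))) = ennreal (\<beta> / pi) * ennreal (s powr q * exp (- \<beta> * s))"
      using b by (subst ennreal_mult[symmetric]) (auto simp: mult_ac)
    then show "ennreal (s powr q * (\<beta> / pi * exp (- \<beta> * s))) * indicator {0..} s
        = ennreal (\<beta> / pi) * (ennreal (s powr q * exp (- \<beta> * s)) * indicator {0..} s)"
      by (simp only: mult.assoc)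
  qed
  also have "\<dots> = ennreal (\<beta> / pi) * ennreal (Gamma (q + 1) / (\<beta> * \<beta> powr q))"
    using gamma_scaled[OF b q] by (simp add: nn_integral_cmult)
  also have "ennreal pi * \<dots> = ennreal (Gamma (q + 1) / \<beta> powr q)"
    using b q by (simp add: ennreal_mult[symmetric] Gamma_real_pos field_simps)
  finally show ?thesis .
qed



lemma gauss_dens_pos: "0 < \<beta> \<Longrightarrow> 0 < gauss_dens \<beta> z"
  by (simp add: gauss_dens_def)

lemma gauss_dens_rot: "gauss_dens \<beta> (cis t * z) = gauss_dens \<beta> z"
  by (simp add: gauss_dens_def norm_mult)

lemma gauss_dens_meas[measurable]: "gauss_dens \<beta> \<in> borel_measurable borel"
  unfolding gauss_dens_def[abs_def] by measurable

lemma main_ineq: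
  fixes p \<beta> :: real and f :: "complex \<Rightarrow> complex" and a :: "nat \<Rightarrow> complex" and j :: nat
  assumes p: "1 < p" and b: "0 < \<beta>"
    and S: "\<And>z. (\<lambda>k. a k * z ^ k) sums f z"
    and contf: "continuous_on UNIV f"
  defines "NF \<equiv> (\<integral>\<^sup>+z. ennreal (norm (f z) powr p * gauss_dens \<beta> z) \<partial>lborel)"
    and "NG \<equiv> (\<integral>\<^sup>+z. ennreal (norm (a j * z ^ j) powr p * gauss_dens \<beta> z) \<partial>lborel)"
  shows "NG \<le> NF"
    and "NF < \<infinity> \<Longrightarrow> NG = NF \<Longrightarrow> (\<forall>z. f z = a j * z ^ j)"
proof -
  have [measurable]: "f \<in> borel_measurable borel" using contf by (rule borel_measurable_continuous_onI)
  define w where "w = gauss_dens \<beta>"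
  have [measurable]: "w \<in> borel_measurable borel" unfolding w_def by measurable
  have wpos: "0 < w z" for z using b by (simp add: w_def gauss_dens_pos)
  define F where "F z = norm (f z) powr p * w z" for z
  define G where "G z = norm (a j * z ^ j) powr p * w z" for z
  have [measurable]: "F \<in> borel_measurable borel" "G \<in> borel_measurable borel"
  proof -
    have cw: "continuous_on UNIV w" unfolding w_def gauss_dens_def[abs_def] by (intro continuous_intros)
    have "continuous_on UNIV F" unfolding F_def[abs_def] using p
      by (intro continuous_intros continuous_on_powr' cw contf) auto
    moreover have "continuous_on UNIV G" unfolding G_def[abs_def] using p
      by (intro continuous_intros continuous_on_powr' cw) auto
    ultimately show "F \<in> borel_measurable borel" "G \<in> borel_measurable borel"
      by (auto intro: borel_measurable_continuous_onI)
  qed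
  define Ic where "Ic z = integral {0..2*pi} (\<lambda>t. norm (f (cis t * z)) powr p)" for z
  define K where "K z = (\<integral>\<^sup>+t. ennreal (F (cis t * z)) * indicator {0..2*pi} t \<partial>lborel)" for z
  have [measurable]: "(\<lambda>x::complex\<times>real. cis (snd x) * fst x) \<in> borel_measurable (lborel \<Otimes>\<^sub>M lborel)"
  proof -
    have "(\<lambda>x::complex\<times>real. cis (snd x) * fst x) \<in> borel_measurable borel"
      by (intro borel_measurable_continuous_onI continuous_intros)
    then show ?thesis unfolding lborel_prod by simp
  qed
  have Kmeas[measurable]: "K \<in> borel_measurable lborel"
    unfolding K_def
    by (rule lborel.borel_measurable_nn_integral_fst[where f="\<lambda>x. ennreal (F (cis (snd x) * fst x)) * indicator {0..2*pi} (snd x)", simplified])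
      measurable
  have Icnn: "0 \<le> Ic z" for z
  proof -
    have "2 * pi * norm (a j * z^j) powr p \<le> Ic z"
      unfolding Ic_def by (rule circle_ineq(2)[OF p S contf])
    moreover have "0 \<le> 2 * pi * norm (a j * z^j) powr p" by simp
    ultimately show ?thesis by linarith
  qed
  have KI: "K z = ennreal (w z * Ic z)" for z
  proof -
    have "K z = (\<integral>\<^sup>+t. ennreal (w z) * (ennreal (norm (f (cis t * z)) powr p) * indicator {0..2*pi} t) \<partial>lborel)"
      unfolding K_def
    proof (intro nn_integral_cong)
      fix t :: real
      have "F (cis t * z) = w z * norm (f (cis t * z)) powr p"
        by (simp add: F_def w_def gauss_dens_rot)
      then have "ennreal (F (cis t * z)) = ennreal (w z) * ennreal (norm (f (cis t * z)) powr p)"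
        using wpos[of z] by (simp add: ennreal_mult)
      then show "ennreal (F (cis t * z)) * indicator {0..2*pi} t = ennreal (w z) * (ennreal (norm (f (cis t * z)) powr p) * indicator {0..2*pi} t)"
        by (simp add: mult.assoc)
    qed
    also have "\<dots> = ennreal (w z) * ennreal (Ic z)"
    proof -
      have "continuous_on UNIV (\<lambda>t. norm (f (cis t * z)) powr p)" using p
        by (intro continuous_on_powr' continuous_intros continuous_on_compose2[OF contf]) auto
      then have [measurable]: "(\<lambda>t. norm (f (cis t * z)) powr p) \<in> borel_measurable borel"
        by (rule borel_measurable_continuous_onI)
      have "(\<integral>\<^sup>+t. ennreal (norm (f (cis t * z)) powr p) * indicator {0..2*pi} t \<partial>lborel) = ennreal (Ic z)"
        unfolding Ic_def by (rule nn_integral_has_integral_lebesgue'[OF _ circle_ineq(1)[OF p S contf]]) simp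
      then show ?thesis by (subst nn_integral_cmult) auto
    qed
    also have "\<dots> = ennreal (w z * Ic z)"
      using wpos[of z] Icnn[of z] by (simp add: ennreal_mult)
    finally show ?thesis .
  qed
  have intK: "(\<integral>\<^sup>+z. K z \<partial>lborel) = ennreal (2*pi) * NF"
    unfolding K_def NF_def using rot_avg[of "\<lambda>z. ennreal (F z)"] by (simp add: F_def w_def)
  have Kge: "ennreal (2*pi * G z) \<le> K z" for z
  proof -
    have "2 * pi * norm (a j * z^j) powr p \<le> Ic z"
      unfolding Ic_def by (rule circle_ineq(2)[OF p S contf])
    then have "2*pi * G z \<le> w z * Ic z"
      using wpos[of z] by (simp add: G_def mult_ac mult_left_mono)
    then show ?thesis unfolding KI by (rule ennreal_leI)
  qed
  define D where "D z = K z - ennreal (2*pi * G z)" for z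
  have [measurable]: "D \<in> borel_measurable lborel" unfolding D_def[abs_def] by measurable
  have KD: "K z = ennreal (2*pi * G z) + D z" for z
    unfolding D_def using Kge[of z] by (simp add: add_diff_inverse_ennreal)
  have main: "ennreal (2*pi) * NF = ennreal (2*pi) * NG + (\<integral>\<^sup>+z. D z \<partial>lborel)"
  proof -
    have "ennreal (2*pi) * NF = (\<integral>\<^sup>+z. ennreal (2*pi * G z) + D z \<partial>lborel)"
      using intK KD by simp
    also have "\<dots> = (\<integral>\<^sup>+z. ennreal (2*pi * G z) \<partial>lborel) + (\<integral>\<^sup>+z. D z \<partial>lborel)"
      by (rule nn_integral_add) auto
    also have "(\<integral>\<^sup>+z. ennreal (2*pi * G z) \<partial>lborel) = ennreal (2*pi) * NG"
      unfolding NG_def G_def w_def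
    proof (subst nn_integral_cmult[symmetric])
      show "(\<lambda>z. ennreal (norm (a j * z ^ j) powr p * gauss_dens \<beta> z)) \<in> borel_measurable lborel"
        using \<open>G \<in> borel_measurable borel\<close> by (simp add: G_def[abs_def] w_def)
      show "(\<integral>\<^sup>+z. ennreal (2*pi * (norm (a j * z ^ j) powr p * gauss_dens \<beta> z)) \<partial>lborel)
          = (\<integral>\<^sup>+z. ennreal (2*pi) * ennreal (norm (a j * z ^ j) powr p * gauss_dens \<beta> z) \<partial>lborel)"
        by (intro nn_integral_cong, subst ennreal_mult) (auto intro!: mult_nonneg_nonneg gauss_dens_pos[OF b, THEN less_imp_le])
    qed
    finally show ?thesis .
  qed
  have "ennreal (2*pi) * NG \<le> ennreal (2*pi) * NF" using main by simp
  then show "NG \<le> NF" by (subst (asm) ennreal_mult_le_mult_iff) auto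
  assume fin: "NF < \<infinity>" and eq: "NG = NF"
  have "(\<integral>\<^sup>+z. D z \<partial>lborel) = 0"
  proof -
    have "ennreal (2*pi) * NF + 0 = ennreal (2*pi) * NF + (\<integral>\<^sup>+z. D z \<partial>lborel)"
      using main eq by simp
    moreover have "ennreal (2*pi) * NF \<noteq> \<infinity>" using fin by (simp add: ennreal_mult_eq_top_iff)
    ultimately show ?thesis by (simp add: ennreal_add_left_cancel)
  qed
  then have "AE z in lborel. D z = 0" by (subst (asm) nn_integral_0_iff_AE) auto
  moreover have "AE z in lborel. z \<noteq> (0::complex)" by (rule AE_lborel_singleton)
  ultimately have AEDz: "AE z in lborel. D z = 0 \<and> z \<noteq> 0" by eventually_elim auto
  have notAE: "\<not> (AE z in (lborel::complex measure). False)"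
  proof
    assume "AE z in (lborel::complex measure). False"
    then obtain N where N: "{x \<in> space lborel. \<not> False} \<subseteq> N" "emeasure lborel N = 0" "N \<in> sets (lborel::complex measure)"
      by (rule AE_E)
    then have "N = UNIV" by auto
    with N(2) show False by simp
  qed
  have "\<exists>z0. D z0 = 0 \<and> z0 \<noteq> 0"
  proof (rule ccontr)
    assume "\<not> (\<exists>z0. D z0 = 0 \<and> z0 \<noteq> 0)"
    then have "\<And>z. D z = 0 \<and> z \<noteq> 0 \<Longrightarrow> False" by blast
    note nz = this
    have "AE z in (lborel::complex measure). False" using AEDz
    proof eventually_elim
      case (elim z) then show False using nz by blast
    qed
    with notAE show False by simp
  qed
  then obtain z0 where z0: "D z0 = 0" "z0 \<noteq> 0" by blast
  have "K z0 \<le> ennreal (2*pi * G z0)" using z0(1) unfolding D_def by (rule ennreal_minus_eq_0)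
  then have "w z0 * Ic z0 \<le> 2*pi * G z0"
    using wpos[of z0] by (simp add: KI G_def)
  then have "Ic z0 \<le> 2 * pi * norm (a j * z0^j) powr p"
    using wpos[of z0] by (simp add: G_def mult_ac)
  moreover have "2 * pi * norm (a j * z0^j) powr p \<le> Ic z0"
    unfolding Ic_def by (rule circle_ineq(2)[OF p S contf])
  ultimately have "Ic z0 = 2 * pi * norm (a j * z0^j) powr p" by simp
  then have circ: "\<forall>t\<in>{0..2*pi}. f (cis t * z0) = a j * z0^j * cis (real j * t)"
    unfolding Ic_def by (rule circle_ineq(3)[OF p S contf])
  have ak: "a k = 0" if "k \<noteq> j" for k
  proof -
    have h1: "((\<lambda>t. f (cis t * z0) * cis (- (real k * t))) has_integral (2*pi) * (a k * z0 ^ k)) {0..2*pi}"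
      by (rule coeff_formula[OF S])
    have "((\<lambda>t. a j * z0^j * cis (real_of_int (int j - int k) * t)) has_integral a j * z0^j * 0) {0..2*pi}"
      using integral_cis_int[of "int j - int k"] that by (intro has_integral_mult_right) simp
    then have h0: "((\<lambda>t. a j * z0^j * cis (real_of_int (int j - int k) * t)) has_integral 0) {0..2*pi}"
      by simp
    have h2: "((\<lambda>t. f (cis t * z0) * cis (- (real k * t))) has_integral 0) {0..2*pi}"
    proof (rule has_integral_eq[OF _ h0])
      fix t :: real assume "t \<in> {0..2*pi}"
      then have "f (cis t * z0) * cis (- (real k * t)) = a j * z0^j * (cis (real j * t) * cis (- (real k * t)))"
        using circ by (simp add: mult.assoc)
      also have "\<dots> = a j * z0^j * cis (real_of_int (int j - int k) * t)"
        by (simp add: cis_mult algebra_simps)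
      finally show "a j * z0^j * cis (real_of_int (int j - int k) * t) = f (cis t * z0) * cis (- (real k * t))"
        by simp
    qed
    have "(2*pi) * (a k * z0 ^ k) = 0" using has_integral_unique[OF h1 h2] .
    then show ?thesis using z0(2) by simp
  qed
  show "\<forall>z. f z = a j * z ^ j"
  proof
    fix z
    have "(\<lambda>k. a k * z ^ k) = (\<lambda>k. if k = j then a k * z ^ k else 0)"
      using ak by (auto simp: fun_eq_iff)
    then have "(\<lambda>k. a k * z ^ k) sums (a j * z ^ j)"
      using sums_single[of j "\<lambda>k. a k * z ^ k"] by simp
    then show "f z = a j * z ^ j" using S[of z] sums_unique2 by blast
  qed
qed

lemma unique_coeff:
  fixes f :: "complex \<Rightarrow> complex" and a :: "nat \<Rightarrow> complex"
  assumes S: "\<And>z. (\<lambda>k. a k * z ^ k) sums f z" and fc: "\<forall>z. f z = c * z ^ j"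
  shows "a j = c"
proof -
  have h1: "((\<lambda>t. f (cis t * 1) * cis (- (real j * t))) has_integral (2*pi) * (a j * 1 ^ j)) {0..2*pi}"
    by (rule coeff_formula[OF S])
  have h2: "((\<lambda>t. f (cis t * 1) * cis (- (real j * t))) has_integral (2*pi) * c) {0..2*pi}"
  proof -
    have "((\<lambda>t. c) has_integral measure lborel {0..2*pi::real} *\<^sub>R c) {0..2*pi}"
      by (rule has_integral_const_real)
    moreover have "f (cis t * 1) * cis (- (real j * t)) = c" for t
    proof -
      have "(cis t)^j = cis (real j * t)" by (rule Complex.DeMoivre)
      then have "f (cis t * 1) * cis (- (real j * t)) = c * (cis (real j * t) * cis (- (real j * t)))"
        using fc by (simp add: mult.assoc)
      also have "cis (real j * t) * cis (- (real j * t)) = 1" by (simp add: cis_mult)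
      finally show ?thesis by simp
    qed
    ultimately show ?thesis by (simp add: scaleR_conv_of_real)
  qed
  show ?thesis using has_integral_unique[OF h1 h2] by simp
qed

lemma norm_monomial_powr:
  fixes z :: complex
  assumes "z \<noteq> 0" "0 < p"
  shows "norm (b * z ^ j) powr p = norm b powr p * ((norm z)^2) powr (real j * p / 2)"
proof -
  have nz: "0 < norm z" using assms by simp
  have "norm (b * z ^ j) powr p = norm b powr p * (norm z ^ j) powr p"
    by (simp add: norm_mult norm_power powr_mult)
  also have "(norm z ^ j) powr p = norm z powr (real j * p)"
  proof -
    have "norm z ^ j = norm z powr real j" using nz by (rule powr_realpow[symmetric])
    then show ?thesis by (simp add: powr_powr)
  qed
  also have "norm z powr (real j * p) = ((norm z)^2) powr (real j * p / 2)"
  proof -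
    have e: "(norm z)^2 = norm z powr real 2" using nz by (rule powr_realpow[symmetric])
    show ?thesis by (subst e, simp only: powr_powr) simp
  qed
  finally show ?thesis .
qed

lemma powr_inv_inj:
  fixes x y p :: real
  assumes "0 < p" "0 \<le> x" "0 \<le> y" "x powr (1 / p) = y powr (1 / p)"
  shows "x = y"
proof -
  have "(x powr (1 / p)) powr p = (y powr (1 / p)) powr p" using assms(4) by simp
  then have "x powr (1 / p * p) = y powr (1 / p * p)" by (simp only: powr_powr)
  then show ?thesis using assms(1-3) by simp
qed

theorem corollary4p7:
  fixes p \<alpha> :: real and f :: "complex \<Rightarrow> complex" and a :: "nat \<Rightarrow> complex" and j :: nat
  assumes "1 < p" and "0 < \<alpha>"
    and "in_fock p \<alpha> f"
    and "\<And>z. (\<lambda>k. a k * z ^ k) sums f z"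
  shows "fock_norm p \<alpha> (\<lambda>z. a j * z ^ j) \<le> fock_norm p \<alpha> f
    \<and> norm (a j) \<le> (\<alpha> * p / 2) powr (real j / 2) / Gamma (real j * p / 2 + 1) powr (1 / p)
                       * fock_norm p \<alpha> f
    \<and> (fock_norm p \<alpha> (\<lambda>z. a j * z ^ j) = fock_norm p \<alpha> f \<longleftrightarrow> (\<exists>c. \<forall>z. f z = c * z ^ j))
    \<and> (norm (a j) = (\<alpha> * p / 2) powr (real j / 2) / Gamma (real j * p / 2 + 1) powr (1 / p)
                       * fock_norm p \<alpha> f \<longleftrightarrow> (\<exists>c. \<forall>z. f z = c * z ^ j))"
proof -
  note p = assms(1) and S = assms(4)
  define \<beta> where "\<beta> = \<alpha> * p / 2"
  have b: "0 < \<beta>" using assms(1,2) by (simp add: \<beta>_def)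
  have hol: "f holomorphic_on UNIV" and intF: "integrable lborel (\<lambda>z. norm (f z) powr p * gauss_dens (\<alpha> * p / 2) z)"
    using assms(3) by (auto simp: in_fock_def)
  have contf: "continuous_on UNIV f" using hol by (rule holomorphic_on_imp_continuous_on)
  define q where "q = real j * p / 2"
  have q: "0 \<le> q" using p by (simp add: q_def)
  define NF where "NF = (\<integral>\<^sup>+z. ennreal (norm (f z) powr p * gauss_dens \<beta> z) \<partial>lborel)"
  define NG where "NG = (\<integral>\<^sup>+z. ennreal (norm (a j * z ^ j) powr p * gauss_dens \<beta> z) \<partial>lborel)"
  have le: "NG \<le> NF" unfolding NF_def NG_def by (rule main_ineq(1)[OF p b S contf])
  have finF: "NF < \<infinity>" using integrableD(2)[OF intF] by (simp add: NF_def \<beta>_def less_top)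
  have finG: "NG < \<infinity>" using le finF by (simp add: order.strict_trans1)
  have measG: "(\<lambda>z. norm (a j * z ^ j) powr p * gauss_dens \<beta> z) \<in> borel_measurable borel"
    using p by (intro borel_measurable_continuous_onI continuous_intros continuous_on_powr')
      (auto simp: gauss_dens_def[abs_def] intro!: continuous_intros)
  have gnn: "0 \<le> gauss_dens \<beta> z" for z using gauss_dens_pos[OF b] less_imp_le by blast
  have fnF: "fock_norm p \<alpha> f = enn2real NF powr (1 / p)"
    unfolding fock_norm_def NF_def \<beta>_def using intF gnn[unfolded \<beta>_def]
    by (subst integral_eq_nn_integral) auto
  have fnG: "fock_norm p \<alpha> (\<lambda>z. a j * z ^ j) = enn2real NG powr (1 / p)"
    unfolding fock_norm_def NG_def \<beta>_def using measG gnn[unfolded \<beta>_def]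
    by (subst integral_eq_nn_integral) (auto simp: \<beta>_def)
  define C where "C = Gamma (q + 1) / \<beta> powr q"
  have Gpos: "0 < Gamma (q + 1)" using q by (intro Gamma_real_pos) simp
  have Cpos: "0 < C" using Gpos b by (simp add: C_def)
  have NGval: "NG = ennreal (norm (a j) powr p * C)"
  proof -
    have "NG = (\<integral>\<^sup>+z. ennreal (norm (a j) powr p) * ennreal (((norm z)^2) powr q * gauss_dens \<beta> z) \<partial>lborel)"
      unfolding NG_def
    proof (rule nn_integral_cong_AE)
      show "AE z in lborel. ennreal (norm (a j * z ^ j) powr p * gauss_dens \<beta> z)
          = ennreal (norm (a j) powr p) * ennreal (((norm z)^2) powr q * gauss_dens \<beta> z)"
        using AE_lborel_singleton[of 0]
      proof eventually_elim
        case (elim z)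
        then show ?case using p gnn[of z]
          by (simp add: norm_monomial_powr q_def ennreal_mult[symmetric] mult.assoc)
      qed
    qed
    also have "\<dots> = ennreal (norm (a j) powr p) * ennreal C"
      using gauss_moment[OF b q] by (subst nn_integral_cmult) (auto simp: C_def)
    also have "\<dots> = ennreal (norm (a j) powr p * C)" using Cpos by (simp add: ennreal_mult)
    finally show ?thesis .
  qed
  have fnG2: "fock_norm p \<alpha> (\<lambda>z. a j * z ^ j) = norm (a j) * C powr (1 / p)"
  proof -
    have "fock_norm p \<alpha> (\<lambda>z. a j * z ^ j) = (norm (a j) powr p * C) powr (1 / p)"
      using fnG NGval Cpos by simp
    also have "\<dots> = (norm (a j) powr p) powr (1 / p) * C powr (1 / p)"
      using Cpos by (simp add: powr_mult)
    also have "(norm (a j) powr p) powr (1 / p) = norm (a j)"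
      using p by (simp add: powr_powr)
    finally show ?thesis .
  qed
  define \<kappa> where "\<kappa> = (\<alpha> * p / 2) powr (real j / 2) / Gamma (real j * p / 2 + 1) powr (1 / p)"
  have kpos: "0 < \<kappa>" unfolding \<kappa>_def
    using Gpos b by (intro divide_pos_pos) (auto simp: q_def \<beta>_def)
  have Cp: "C powr (1 / p) = Gamma (real j * p / 2 + 1) powr (1 / p) / (\<alpha> * p / 2) powr (real j / 2)"
  proof -
    have "C powr (1 / p) = Gamma (q + 1) powr (1 / p) / (\<beta> powr q) powr (1 / p)"
      unfolding C_def using Gpos b by (simp add: powr_divide)
    also have "(\<beta> powr q) powr (1 / p) = \<beta> powr (real j / 2)"
      using p by (simp add: powr_powr q_def)
    finally show ?thesis by (simp add: q_def \<beta>_def)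
  qed
  have aj: "norm (a j) = \<kappa> * fock_norm p \<alpha> (\<lambda>z. a j * z ^ j)"
  proof -
    define X where "X = Gamma (real j * p / 2 + 1) powr (1 / p)"
    define Y where "Y = (\<alpha> * p / 2) powr (real j / 2)"
    have X: "X \<noteq> 0" using Gpos by (simp add: X_def q_def)
    have Y: "Y \<noteq> 0" using assms(1,2) by (simp add: Y_def)
    have "\<kappa> * fock_norm p \<alpha> (\<lambda>z. a j * z ^ j) = Y / X * (norm (a j) * (X / Y))"
      unfolding fnG2 Cp \<kappa>_def X_def Y_def ..
    also have "\<dots> = norm (a j)" using X Y by (simp add: field_simps)
    finally show ?thesis by simp
  qed
  have P1: "fock_norm p \<alpha> (\<lambda>z. a j * z ^ j) \<le> fock_norm p \<alpha> f"
  proof -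
    have "enn2real NG \<le> enn2real NF" using le finF by (intro enn2real_mono) auto
    then have "enn2real NG powr (1 / p) \<le> enn2real NF powr (1 / p)"
      by (rule powr_mono2[rotated 2]) (use p in auto)
    then show ?thesis unfolding fnF fnG .
  qed
  have P3: "fock_norm p \<alpha> (\<lambda>z. a j * z ^ j) = fock_norm p \<alpha> f \<longleftrightarrow> (\<exists>c. \<forall>z. f z = c * z ^ j)"
  proof
    assume eq: "fock_norm p \<alpha> (\<lambda>z. a j * z ^ j) = fock_norm p \<alpha> f"
    have "enn2real NG = enn2real NF"
      by (rule powr_inv_inj[of p]) (use p eq fnF fnG in auto)
    then have "ennreal (enn2real NG) = ennreal (enn2real NF)" by simp
    then have "NG = NF" using ennreal_enn2real[of NG] ennreal_enn2real[of NF] finF finG by simp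
    then have "\<forall>z. f z = a j * z ^ j"
      using main_ineq(2)[OF p b S contf] finF unfolding NF_def NG_def by blast
    then show "\<exists>c. \<forall>z. f z = c * z ^ j" by blast
  next
    assume "\<exists>c. \<forall>z. f z = c * z ^ j"
    then obtain c where c: "\<forall>z. f z = c * z ^ j" by blast
    have "a j = c" by (rule unique_coeff[OF S c])
    then have "f = (\<lambda>z. a j * z ^ j)" using c by auto
    then show "fock_norm p \<alpha> (\<lambda>z. a j * z ^ j) = fock_norm p \<alpha> f" by simp
  qed
  have P2: "norm (a j) \<le> \<kappa> * fock_norm p \<alpha> f"
    unfolding aj using P1 kpos by (intro mult_left_mono) auto
  have P4: "norm (a j) = \<kappa> * fock_norm p \<alpha> f \<longleftrightarrow> (\<exists>c. \<forall>z. f z = c * z ^ j)"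
  proof -
    have "norm (a j) = \<kappa> * fock_norm p \<alpha> f \<longleftrightarrow> fock_norm p \<alpha> (\<lambda>z. a j * z ^ j) = fock_norm p \<alpha> f"
      unfolding aj using kpos by simp
    then show ?thesis using P3 by simp
  qed
  show ?thesis using P1 P2 P3 P4 unfolding \<kappa>_def by blast
qed

end
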